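(* Against an oblivious adversary in the ASYNC$_{IC}$ model (arbitrary wait times $\mathcal{W}\ge 0$, zero computation delay $\mathcal{C}=0$), if the algorithm knows the ratio $\alpha$ of the speeds of the two robots, then it is possible to gather the two robots: there is a randomized algorithm such that, for every choice of wait times by the adversary, the robots gather with positive probability.
   Context: Two robots are anonymous, oblivious (no memory of past cycles), silent (no communication) points in the Euclidean plane with no common coordinate system, each having access to random bits; each robot moves at its own constant speed, and $\alpha>0$ denotes the ratio of their speeds (a robot cannot tell whether it is the faster or slower one). Each robot repeatedly executes a cycle in which it stays still for a while, then moves: the look instant (when it obtains a snapshot of the other robot's current position, which may be in motion) splits the stationary period into a wait time $\mathcal{W}$ (before the look) and a computation delay $\mathcal{C}$ (after the look). It then moves to a destination computed from the snapshot and its random bits, reaching it in the same cycle (rigid movement). A robot that looks and finds the other robot at its own position decides it has gathered and never moves again; gathering means both robots are at the same point. The scheduler is an adversary choosing the wait times and computation delays of every cycle of each robot; an oblivious adversary knows the algorithm but not the outcomes of random bits, so it fixes all these sequences before the execution. ASYNC$_{IC}$ is the asynchronous model with all computation delays equal to $0$. *)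

theory Defs
  imports "HOL-Probability.Probability"
begin

text \<open>Robots are indexed by bool; the other robot of i is (\<not> i).
  Positions are points of the plane, represented as complex numbers.\<close>

text \<open>Local coordinate systems: arbitrary similarities of the plane
  (origin, orientation, unit length and chirality all unknown).\<close>
definition similarity :: "(complex \<Rightarrow> complex) \<Rightarrow> bool" where
  "similarity f \<longleftrightarrow> (\<exists>a b. a \<noteq> 0 \<and>
      (f = (\<lambda>z. a * z + b) \<or> f = (\<lambda>z. a * cnj z + b)))"

text \<open>Position of a robot at the start of its k-th cycle, given its initial
  position and the sequence of destinations D (rigid movement).\<close>
fun startpos :: "complex \<Rightarrow> (nat \<Rightarrow> complex) \<Rightarrow> nat \<Rightarrow> complex" where
  "startpos x0 D 0 = x0"
| "startpos x0 D (Suc k) = D k"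

text \<open>Start time of the k-th cycle: wait W k, look (computation delay 0),
  then move to D k at speed v.\<close>
fun cstart :: "(nat \<Rightarrow> real) \<Rightarrow> real \<Rightarrow> complex \<Rightarrow> (nat \<Rightarrow> complex) \<Rightarrow> nat \<Rightarrow> real" where
  "cstart W v x0 D 0 = 0"
| "cstart W v x0 D (Suc k) =
     cstart W v x0 D k + W k + cmod (D k - startpos x0 D k) / v"

definition look_time :: "(nat \<Rightarrow> real) \<Rightarrow> real \<Rightarrow> complex \<Rightarrow> (nat \<Rightarrow> complex) \<Rightarrow> nat \<Rightarrow> real" where
  "look_time W v x0 D k = cstart W v x0 D k + W k"

text \<open>An algorithm maps (own position in local coordinates, observed position of
  the other robot in local coordinates, fresh random bits) to a destination in
  local coordinates.  The random bits of robot i in cycle k are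
  (\<lambda>n. \<omega> (i,k,n)).

  exec_prefix alg fr v W x0 \<omega> H P D: P (positions over time) and D (destinations)
  form the execution on the time interval [0,H).  A robot that, at a look, sees the
  other robot at its own position stops forever.\<close>
definition exec_prefix ::
  "(complex \<Rightarrow> complex \<Rightarrow> (nat \<Rightarrow> bool) \<Rightarrow> complex) \<Rightarrow> (bool \<Rightarrow> complex \<Rightarrow> complex) \<Rightarrow>
   (bool \<Rightarrow> real) \<Rightarrow> (bool \<Rightarrow> nat \<Rightarrow> real) \<Rightarrow> (bool \<Rightarrow> complex) \<Rightarrow>
   (bool \<times> nat \<times> nat \<Rightarrow> bool) \<Rightarrow> real \<Rightarrow> (bool \<Rightarrow> real \<Rightarrow> complex) \<Rightarrow>
   (bool \<Rightarrow> nat \<Rightarrow> complex) \<Rightarrow> bool" where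
  "exec_prefix alg fr v W x0 \<omega> H P D \<longleftrightarrow>
    (\<forall>i. let X = startpos (x0 i) (D i);
             S = cstart (W i) (v i) (x0 i) (D i);
             L = look_time (W i) (v i) (x0 i) (D i);
             sees = (\<lambda>k. P i (L k) = P (\<not> i) (L k));
             active = (\<lambda>k. \<forall>k'<k. \<not> sees k')
         in (\<forall>k. active k \<longrightarrow>
                 (\<forall>t. S k \<le> t \<and> t \<le> L k \<and> t < H \<longrightarrow> P i t = X k))
          \<and> (\<forall>k. active k \<and> L k < H \<and> sees k \<longrightarrow>
                 (\<forall>t. L k \<le> t \<and> t < H \<longrightarrow> P i t = X k))
          \<and> (\<forall>k. active k \<and> L k < H \<and> \<not> sees k \<longrightarrow>
                 D i k = inv (fr i) (alg (fr i (X k)) (fr i (P (\<not> i) (L k))) (\<lambda>n. \<omega> (i, k, n)))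
               \<and> (\<forall>t. L k \<le> t \<and> t \<le> S (Suc k) \<and> t < H \<longrightarrow>
                      P i t = X k + of_real ((t - L k) * v i) * sgn (D i k - X k)))
          \<and> ((\<exists>k. active k \<and> L k < H \<and> sees k) \<or> (\<exists>k. H \<le> S k)))"

text \<open>Gathering: in some finite prefix of the execution both robots have looked and
  found the other robot at their own position (hence both stay forever at the same
  point).\<close>
definition gathers ::
  "(complex \<Rightarrow> complex \<Rightarrow> (nat \<Rightarrow> bool) \<Rightarrow> complex) \<Rightarrow> (bool \<Rightarrow> complex \<Rightarrow> complex) \<Rightarrow>
   (bool \<Rightarrow> real) \<Rightarrow> (bool \<Rightarrow> nat \<Rightarrow> real) \<Rightarrow> (bool \<Rightarrow> complex) \<Rightarrow>
   (bool \<times> nat \<times> nat \<Rightarrow> bool) \<Rightarrow> bool" where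
  "gathers alg fr v W x0 \<omega> \<longleftrightarrow>
    (\<exists>H P D. exec_prefix alg fr v W x0 \<omega> H P D \<and>
      (\<forall>i. \<exists>k. let L = look_time (W i) (v i) (x0 i) (D i) in
           (\<forall>k'<k. P i (L k') \<noteq> P (\<not> i) (L k')) \<and> L k < H \<and> P i (L k) = P (\<not> i) (L k)))"

definition coin_space :: "(bool \<times> nat \<times> nat \<Rightarrow> bool) measure" where
  "coin_space = PiM UNIV (\<lambda>_. measure_pmf (bernoulli_pmf (1/2)))"

end

theory Submission
  imports Defs
begin


definition fval :: "real \<Rightarrow> nat \<Rightarrow> real" where
  "fval \<alpha> n = (if n = 0 then 0 else if n = 1 then 1 else if n = 2 then 1/(1+\<alpha>)
     else if n = 3 then \<alpha>/(1+\<alpha>)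
     else real (fst (prod_decode (n-4))) / 2 ^ (snd (prod_decode (n-4))))"

definition cval :: "real \<Rightarrow> (nat \<Rightarrow> bool) \<Rightarrow> real" where
  "cval \<alpha> bits = fval \<alpha> (LEAST n. \<not> bits n)"

definition galg :: "real \<Rightarrow> complex \<Rightarrow> complex \<Rightarrow> (nat \<Rightarrow> bool) \<Rightarrow> complex" where
  "galg \<alpha> own other bits = own + of_real (cval \<alpha> bits) * (other - own)"

lemma sim_equiv:
  assumes "similarity f"
  shows "inv f (f x + of_real c * (f y - f x)) = x + of_real c * (y - x)"
proof -
  from assms obtain a b where a: "a \<noteq> 0" and f: "f = (\<lambda>z. a * z + b) \<or> f = (\<lambda>z. a * cnj z + b)"
    unfolding similarity_def by blast
  have inj: "inj f"
    using f a by (auto simp: inj_def)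
  have "f x + of_real c * (f y - f x) = f (x + of_real c * (y - x))"
    using f by (auto simp: algebra_simps)
  then show ?thesis using inj by (simp add: inv_f_f)
qed

lemma cval_pat:
  assumes "\<forall>n<m. bits n" "\<not> bits m"
  shows "cval \<alpha> bits = fval \<alpha> m"
proof -
  have "(LEAST n. \<not> bits n) = m"
    by (rule Least_equality) (use assms in \<open>auto simp: not_less[symmetric]\<close>)
  then show ?thesis by (simp add: cval_def)
qed

lemma cyl_set_eq:
  "{\<omega>::bool\<times>nat\<times>nat\<Rightarrow>bool. \<forall>j\<in>J. \<omega> j = \<beta> j} =
   prod_emb UNIV (\<lambda>_. measure_pmf (bernoulli_pmf (1/2))) J (Pi\<^sub>E J (\<lambda>j. {\<beta> j}))"
  by (auto simp: prod_emb_def PiE_iff extensional_def)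

lemma cyl_measure:
  assumes "finite J"
  shows "{\<omega>. \<forall>j\<in>J. \<omega> j = \<beta> j} \<in> sets coin_space \<and> emeasure coin_space {\<omega>. \<forall>j\<in>J. \<omega> j = \<beta> j} > 0"
proof -
  have e: "emeasure coin_space {\<omega>. \<forall>j\<in>J. \<omega> j = \<beta> j} = (\<Prod>j\<in>J. emeasure (measure_pmf (bernoulli_pmf (1/2))) {\<beta> j})"
    unfolding coin_space_def cyl_set_eq
    by (rule emeasure_PiM_emb) (auto simp: assms prob_space_measure_pmf)
  have p: "\<And>j. emeasure (measure_pmf (bernoulli_pmf (1/2))) {\<beta> j} = inverse 2"
    by (simp add: emeasure_pmf_single)
  have "(\<Prod>j\<in>J. emeasure (measure_pmf (bernoulli_pmf (1/2))) {\<beta> j}) = inverse ((2::ennreal) ^ card J)"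
    using p by (simp add: ennreal_inverse_power)
  then have "(\<Prod>j\<in>J. emeasure (measure_pmf (bernoulli_pmf (1/2))) {\<beta> j}) > 0"
    by (simp add: ennreal_inverse_positive power_eq_top_ennreal)
  moreover have "{\<omega>. \<forall>j\<in>J. \<omega> j = \<beta> j} \<in> sets coin_space"
    unfolding coin_space_def cyl_set_eq
    by (rule sets_PiM_I) (auto simp: assms)
  ultimately show ?thesis using e by simp
qed

definition RC :: "real \<Rightarrow> (nat\<Rightarrow>real) \<Rightarrow> real \<Rightarrow> complex \<Rightarrow> (nat \<Rightarrow> complex) \<Rightarrow> nat \<Rightarrow> (nat\<Rightarrow>nat)
   \<Rightarrow> (real\<Rightarrow>complex) \<Rightarrow> (real\<Rightarrow>complex) \<Rightarrow> bool" where
 "RC \<alpha> W v x0 D K ch Ps Po \<longleftrightarrow> (let X = startpos x0 D; S = cstart W v x0 D; L = look_time W v x0 D in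
   (\<forall>k\<le>K. \<forall>t. S k \<le> t \<and> t \<le> L k \<longrightarrow> Ps t = X k) \<and> (\<forall>k<K. Ps (L k) \<noteq> Po (L k)) \<and>
   Ps (L K) = Po (L K) \<and> (\<forall>t. L K \<le> t \<longrightarrow> Ps t = X K) \<and>
   (\<forall>k<K. D k = X k + of_real (fval \<alpha> (ch k)) * (Po (L k) - X k)) \<and>
   (\<forall>k<K. \<forall>t. L k \<le> t \<and> t \<le> S (Suc k) \<longrightarrow> Ps t = X k + of_real ((t - L k) * v) * sgn (D k - X k)))"

lemma robot_ok:
  assumes rc: "RC \<alpha> Wi vi x0i Di K ch Ps Po"
    and f: "similarity f"
    and bits: "\<forall>k<K. cval \<alpha> (B k) = fval \<alpha> (ch k)"
    and H: "look_time Wi vi x0i Di K < H"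
  shows "let X = startpos x0i Di;
             S = cstart Wi vi x0i Di;
             L = look_time Wi vi x0i Di;
             sees = (\<lambda>k. Ps (L k) = Po (L k));
             active = (\<lambda>k. \<forall>k'<k. \<not> sees k')
         in (\<forall>k. active k \<longrightarrow>
                 (\<forall>t. S k \<le> t \<and> t \<le> L k \<and> t < H \<longrightarrow> Ps t = X k))
          \<and> (\<forall>k. active k \<and> L k < H \<and> sees k \<longrightarrow>
                 (\<forall>t. L k \<le> t \<and> t < H \<longrightarrow> Ps t = X k))
          \<and> (\<forall>k. active k \<and> L k < H \<and> \<not> sees k \<longrightarrow>
                 Di k = inv f (galg \<alpha> (f (X k)) (f (Po (L k))) (B k))
               \<and> (\<forall>t. L k \<le> t \<and> t \<le> S (Suc k) \<and> t < H \<longrightarrow>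
                      Ps t = X k + of_real ((t - L k) * vi) * sgn (Di k - X k)))
          \<and> ((\<exists>k. active k \<and> L k < H \<and> sees k) \<or> (\<exists>k. H \<le> S k))"
proof -
  define X where "X = startpos x0i Di"
  define S where "S = cstart Wi vi x0i Di"
  define L where "L = look_time Wi vi x0i Di"
  have a: "\<forall>k\<le>K. \<forall>t. S k \<le> t \<and> t \<le> L k \<longrightarrow> Ps t = X k"
   and b: "\<forall>k<K. Ps (L k) \<noteq> Po (L k)"
   and c: "Ps (L K) = Po (L K)"
   and d: "\<forall>t. L K \<le> t \<longrightarrow> Ps t = X K"
   and e: "\<forall>k<K. Di k = X k + of_real (fval \<alpha> (ch k)) * (Po (L k) - X k)"
   and g: "\<forall>k<K. \<forall>t. L k \<le> t \<and> t \<le> S (Suc k) \<longrightarrow> Ps t = X k + of_real ((t - L k) * vi) * sgn (Di k - X k)"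
    using rc unfolding RC_def Let_def X_def S_def L_def by blast+
  have act: "\<And>k. (\<forall>k'<k. \<not> Ps (L k') = Po (L k')) \<Longrightarrow> k \<le> K"
    using c by (meson not_le)
  have act2: "\<And>k. (\<forall>k'<k. \<not> Ps (L k') = Po (L k')) \<Longrightarrow> Ps (L k) = Po (L k) \<Longrightarrow> k = K"
    using act b by (meson le_neq_implies_less)
  have act3: "\<And>k. (\<forall>k'<k. \<not> Ps (L k') = Po (L k')) \<Longrightarrow> \<not> Ps (L k) = Po (L k) \<Longrightarrow> k < K"
    using act c by (metis le_neq_implies_less)
  have algeq: "\<And>k. k < K \<Longrightarrow> Di k = inv f (galg \<alpha> (f (X k)) (f (Po (L k))) (B k))"
    using e bits sim_equiv[OF f] by (simp add: galg_def)
  have actK: "\<forall>k'<K. \<not> Ps (L k') = Po (L k')" using b by blast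
  show ?thesis
    unfolding Let_def X_def[symmetric] S_def[symmetric] L_def[symmetric]
  proof (intro conjI allI impI)
    fix k t assume "\<forall>k'<k. \<not> Ps (L k') = Po (L k')" "S k \<le> t \<and> t \<le> L k \<and> t < H"
    then show "Ps t = X k" using a act by blast
  next
    fix k t assume "(\<forall>k'<k. \<not> Ps (L k') = Po (L k')) \<and> L k < H \<and> Ps (L k) = Po (L k)" "L k \<le> t \<and> t < H"
    then show "Ps t = X k" using d act2 by blast
  next
    fix k assume "(\<forall>k'<k. \<not> Ps (L k') = Po (L k')) \<and> L k < H \<and> \<not> Ps (L k) = Po (L k)"
    then show "Di k = inv f (galg \<alpha> (f (X k)) (f (Po (L k))) (B k))" using algeq act3 by blast
  next
    fix k t assume "(\<forall>k'<k. \<not> Ps (L k') = Po (L k')) \<and> L k < H \<and> \<not> Ps (L k) = Po (L k)"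
      "L k \<le> t \<and> t \<le> S (Suc k) \<and> t < H"
    then show "Ps t = X k + of_real ((t - L k) * vi) * sgn (Di k - X k)" using g act3 by blast
  next
    show "(\<exists>k. (\<forall>k'<k. \<not> Ps (L k') = Po (L k')) \<and> L k < H \<and> Ps (L k) = Po (L k)) \<or> (\<exists>k. H \<le> S k)"
      using actK H c unfolding L_def by blast
  qed
qed

lemma cert:
  assumes sim: "\<And>i. similarity (fr i)"
    and rc: "\<And>i. RC \<alpha> (W i) (v i) (x0 i) (D i) (K i) (ch i) (P i) (P (\<not> i))"
  shows "\<exists>A\<in>sets coin_space. A \<subseteq> {\<omega>. gathers (galg \<alpha>) fr v W x0 \<omega>} \<and> 0 < emeasure coin_space A"
proof -
  define J where "J = (\<Union>i. \<Union>k\<in>{..<K i}. (\<lambda>n. (i,k,n)) ` {..ch i k})"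
  define \<beta> where "\<beta> = (\<lambda>(i::bool,k::nat,n). n < ch i k)"
  have fin: "finite J" unfolding J_def by auto
  define A where "A = {\<omega>. \<forall>j\<in>J. \<omega> j = \<beta> j}"
  have "A \<subseteq> {\<omega>. gathers (galg \<alpha>) fr v W x0 \<omega>}"
  proof
    fix \<omega> assume "\<omega> \<in> A"
    then have om: "\<And>i k n. k < K i \<Longrightarrow> n \<le> ch i k \<Longrightarrow> \<omega> (i,k,n) = (n < ch i k)"
      unfolding A_def J_def \<beta>_def by auto
    have bits: "\<And>i. \<forall>k<K i. cval \<alpha> ((\<lambda>k n. \<omega> (i,k,n)) k) = fval \<alpha> (ch i k)"
      using om by (auto intro!: cval_pat)
    define H where "H = max (look_time (W True) (v True) (x0 True) (D True) (K True))
                             (look_time (W False) (v False) (x0 False) (D False) (K False)) + 1"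
    have HH: "\<And>i. look_time (W i) (v i) (x0 i) (D i) (K i) < H"
      unfolding H_def by (case_tac i) auto
    have ex: "exec_prefix (galg \<alpha>) fr v W x0 \<omega> H P D"
      unfolding exec_prefix_def
    proof (intro allI)
      fix i
      show "let X = startpos (x0 i) (D i); S = cstart (W i) (v i) (x0 i) (D i);
             L = look_time (W i) (v i) (x0 i) (D i);
             sees = \<lambda>k. P i (L k) = P (\<not> i) (L k); active = \<lambda>k. \<forall>k'<k. \<not> sees k'
         in (\<forall>k. active k \<longrightarrow> (\<forall>t. S k \<le> t \<and> t \<le> L k \<and> t < H \<longrightarrow> P i t = X k)) \<and>
            (\<forall>k. active k \<and> L k < H \<and> sees k \<longrightarrow> (\<forall>t. L k \<le> t \<and> t < H \<longrightarrow> P i t = X k)) \<and>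
            (\<forall>k. active k \<and> L k < H \<and> \<not> sees k \<longrightarrow>
                 D i k = inv (fr i) (galg \<alpha> (fr i (X k)) (fr i (P (\<not> i) (L k))) (\<lambda>n. \<omega> (i, k, n))) \<and>
                 (\<forall>t. L k \<le> t \<and> t \<le> S (Suc k) \<and> t < H \<longrightarrow>
                      P i t = X k + complex_of_real ((t - L k) * v i) * sgn (D i k - X k))) \<and>
            ((\<exists>k. active k \<and> L k < H \<and> sees k) \<or> (\<exists>k. H \<le> S k))"
        using robot_ok[OF rc[of i] sim[of i] bits[of i] HH[of i]] by simp
    qed
    have "\<forall>i. \<exists>k. let L = look_time (W i) (v i) (x0 i) (D i) in
           (\<forall>k'<k. P i (L k') \<noteq> P (\<not> i) (L k')) \<and> L k < H \<and> P i (L k) = P (\<not> i) (L k)"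
    proof
      fix i
      show "\<exists>k. let L = look_time (W i) (v i) (x0 i) (D i) in
           (\<forall>k'<k. P i (L k') \<noteq> P (\<not> i) (L k')) \<and> L k < H \<and> P i (L k) = P (\<not> i) (L k)"
        using rc[of i] HH[of i] unfolding RC_def Let_def by blast
    qed
    with ex show "\<omega> \<in> {\<omega>. gathers (galg \<alpha>) fr v W x0 \<omega>}"
      unfolding gathers_def by blast
  qed
  moreover have "A \<in> sets coin_space \<and> 0 < emeasure coin_space A"
    unfolding A_def by (rule cyl_measure[OF fin])
  ultimately show ?thesis by blast
qed



fun Xr :: "real \<Rightarrow> (nat \<Rightarrow> real) \<Rightarrow> nat \<Rightarrow> real" where
  "Xr r0 Dr 0 = r0" | "Xr r0 Dr (Suc k) = Dr k"

fun Sr :: "(nat\<Rightarrow>real) \<Rightarrow> real \<Rightarrow> real \<Rightarrow> (nat\<Rightarrow>real) \<Rightarrow> nat \<Rightarrow> real" where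
  "Sr W w r0 Dr 0 = 0"
| "Sr W w r0 Dr (Suc k) = Sr W w r0 Dr k + W k + \<bar>Dr k - Xr r0 Dr k\<bar> / w"

definition Lr :: "(nat\<Rightarrow>real) \<Rightarrow> real \<Rightarrow> real \<Rightarrow> (nat\<Rightarrow>real) \<Rightarrow> nat \<Rightarrow> real" where
  "Lr W w r0 Dr k = Sr W w r0 Dr k + W k"

definition RCr :: "real \<Rightarrow> (nat\<Rightarrow>real) \<Rightarrow> real \<Rightarrow> real \<Rightarrow> (nat \<Rightarrow> real) \<Rightarrow> nat \<Rightarrow> (nat\<Rightarrow>nat)
   \<Rightarrow> (real\<Rightarrow>real) \<Rightarrow> (real\<Rightarrow>real) \<Rightarrow> bool" where
 "RCr \<alpha> W w r0 Dr K ch \<rho>s \<rho>o \<longleftrightarrow>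
   (\<forall>k\<le>K. \<forall>t. Sr W w r0 Dr k \<le> t \<and> t \<le> Lr W w r0 Dr k \<longrightarrow> \<rho>s t = Xr r0 Dr k) \<and>
   (\<forall>k<K. \<rho>s (Lr W w r0 Dr k) \<noteq> \<rho>o (Lr W w r0 Dr k)) \<and>
   \<rho>s (Lr W w r0 Dr K) = \<rho>o (Lr W w r0 Dr K) \<and>
   (\<forall>t. Lr W w r0 Dr K \<le> t \<longrightarrow> \<rho>s t = Xr r0 Dr K) \<and>
   (\<forall>k<K. Dr k = Xr r0 Dr k + fval \<alpha> (ch k) * (\<rho>o (Lr W w r0 Dr k) - Xr r0 Dr k)) \<and>
   (\<forall>k<K. \<forall>t. Lr W w r0 Dr k \<le> t \<and> t \<le> Sr W w r0 Dr (Suc k) \<longrightarrow>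
        \<rho>s t = Xr r0 Dr k + (t - Lr W w r0 Dr k) * w * sgn (Dr k - Xr r0 Dr k))"

definition lp :: "complex \<Rightarrow> complex \<Rightarrow> real \<Rightarrow> complex" where
  "lp a u r = a + of_real r * u"

lemma lp_diff: "lp a u x - lp a u y = of_real (x - y) * u"
  by (simp add: lp_def algebra_simps)

lemma lp_inj: "u \<noteq> 0 \<Longrightarrow> lp a u x = lp a u y \<longleftrightarrow> x = y"
  by (simp add: lp_def)

lemma lp_lin: "lp a u (x + c * (y - x)) = lp a u x + of_real c * (lp a u y - lp a u x)"
  by (simp add: lp_def algebra_simps)

lemma startpos_lp: "startpos (lp a u r0) (\<lambda>k. lp a u (Dr k)) k = lp a u (Xr r0 Dr k)"
  by (cases k) auto

lemma cstart_lp: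
  assumes "u \<noteq> 0" "v > 0"
  shows "cstart W v (lp a u r0) (\<lambda>k. lp a u (Dr k)) k = Sr W (v / cmod u) r0 Dr k"
proof (induction k)
  case 0 then show ?case by simp
next
  case (Suc k)
  have "cmod (lp a u (Dr k) - lp a u (Xr r0 Dr k)) / v = \<bar>Dr k - Xr r0 Dr k\<bar> / (v / cmod u)"
    using assms by (simp only: lp_diff norm_mult norm_of_real) (simp add: field_simps)
  then show ?case using Suc by (simp add: startpos_lp)
qed

lemma look_lp:
  assumes "u \<noteq> 0" "v > 0"
  shows "look_time W v (lp a u r0) (\<lambda>k. lp a u (Dr k)) k = Lr W (v / cmod u) r0 Dr k"
  using cstart_lp[OF assms] by (simp add: look_time_def Lr_def)

lemma move_lp:
  assumes "u \<noteq> 0" "v > 0"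
  shows "lp a u r + of_real (s * v) * sgn (lp a u D - lp a u r) = lp a u (r + s * (v / cmod u) * sgn (D - r))"
proof -
  have "sgn (lp a u D - lp a u r) = of_real (sgn (D - r)) * sgn u"
    by (simp only: lp_diff sgn_mult sgn_of_real)
  also have "sgn u = u / of_real (cmod u)"
    by (simp add: sgn_div_norm scaleR_conv_of_real divide_inverse mult.commute)
  finally have "sgn (lp a u D - lp a u r) = of_real (sgn (D - r)) * (u / of_real (cmod u))" .
  then show ?thesis using assms by (simp add: lp_def algebra_simps)
qed

lemma bridge:
  assumes u: "u \<noteq> 0" and v: "v > 0" and w: "w = v / cmod u"
    and r: "RCr \<alpha> W w r0 Dr K ch \<rho>s \<rho>o"
  shows "RC \<alpha> W v (lp a u r0) (\<lambda>k. lp a u (Dr k)) K ch (\<lambda>t. lp a u (\<rho>s t)) (\<lambda>t. lp a u (\<rho>o t))"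
  unfolding RC_def Let_def startpos_lp cstart_lp[OF u v] look_lp[OF u v] w[symmetric]
    move_lp[OF u v, folded w] lp_inj[OF u]
proof (intro conjI)
  show "\<forall>k<K. lp a u (Dr k) = lp a u (Xr r0 Dr k) + complex_of_real (fval \<alpha> (ch k)) *
            (lp a u (\<rho>o (Lr W w r0 Dr k)) - lp a u (Xr r0 Dr k))"
  proof (intro allI impI)
    fix k assume "k < K"
    then have e: "Dr k = Xr r0 Dr k + fval \<alpha> (ch k) * (\<rho>o (Lr W w r0 Dr k) - Xr r0 Dr k)"
      using r unfolding RCr_def by blast
    show "lp a u (Dr k) = lp a u (Xr r0 Dr k) + complex_of_real (fval \<alpha> (ch k)) *
            (lp a u (\<rho>o (Lr W w r0 Dr k)) - lp a u (Xr r0 Dr k))"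
      by (subst e) (simp add: lp_lin)
  qed
qed (use r in \<open>unfold RCr_def; blast\<close>)+



lemma Sr_Suc': "Sr W w r0 Dr (Suc k) = Lr W w r0 Dr k + \<bar>Dr k - Xr r0 Dr k\<bar> / w"
  by (simp add: Lr_def)

lemma Sr_le_Lr: "W k \<ge> 0 \<Longrightarrow> Sr W w r0 Dr k \<le> Lr W w r0 Dr k"
  by (simp add: Lr_def)

lemma Lr_le_Sr_Suc: "w > 0 \<Longrightarrow> Lr W w r0 Dr k \<le> Sr W w r0 Dr (Suc k)"
  by (simp add: Lr_def zero_le_divide_iff)

lemma Sr_mono:
  assumes "\<forall>k. W k \<ge> 0" "w > 0" "k \<le> k'"
  shows "Sr W w r0 Dr k \<le> Sr W w r0 Dr k'"
proof -
  have "\<And>n. Sr W w r0 Dr n \<le> Sr W w r0 Dr (Suc n)"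
    using assms(1,2) by (simp add: add_nonneg_nonneg)
  then show ?thesis using assms(3) by (rule lift_Suc_mono_le)
qed

lemma Lr_mono:
  assumes "\<forall>k. W k \<ge> 0" "w > 0" "k \<le> k'"
  shows "Lr W w r0 Dr k \<le> Lr W w r0 Dr k'"
proof (cases "k = k'")
  case False
  then have "Suc k \<le> k'" using assms by simp
  have "Lr W w r0 Dr k \<le> Sr W w r0 Dr (Suc k)" using assms Lr_le_Sr_Suc by blast
  also have "\<dots> \<le> Sr W w r0 Dr k'" using Sr_mono[OF assms(1,2) \<open>Suc k \<le> k'\<close>] .
  also have "\<dots> \<le> Lr W w r0 Dr k'" using assms(1) Sr_le_Lr by blast
  finally show ?thesis .
qed simp

lemma Lr_le_Sr:
  assumes "\<forall>k. W k \<ge> 0" "w > 0" "k < k'"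
  shows "Lr W w r0 Dr k \<le> Sr W w r0 Dr k'"
proof -
  have "Lr W w r0 Dr k \<le> Sr W w r0 Dr (Suc k)" by (rule Lr_le_Sr_Suc[OF assms(2)])
  also have "\<dots> \<le> Sr W w r0 Dr k'" using Sr_mono[OF assms(1,2), of "Suc k" k'] assms(3) by simp
  finally show ?thesis .
qed

lemma Sr_prefix:
  assumes "\<forall>m<k. Dr m = Dr' m"
  shows "Sr W w r0 Dr k = Sr W w r0 Dr' k"
  using assms
proof (induction k)
  case (Suc k)
  have x: "Xr r0 Dr k = Xr r0 Dr' k" using Suc.prems by (cases k) auto
  show ?case using Suc by (simp add: x)
qed simp

lemma Lr_prefix:
  assumes "\<forall>m<k. Dr m = Dr' m"
  shows "Lr W w r0 Dr k = Lr W w r0 Dr' k"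
  using Sr_prefix[OF assms] by (simp add: Lr_def)

lemma Xr_const: "Xr c (\<lambda>_. c) k = c"
  by (cases k) auto

lemma Lr_stay_Suc: "Lr W w c (\<lambda>_. c) (Suc k) = Lr W w c (\<lambda>_. c) k + W (Suc k)"
  by (simp add: Lr_def Xr_const)

lemma fval_dense:
  assumes "0 \<le> x" "x < y"
  shows "\<exists>n. x < fval \<alpha> n \<and> fval \<alpha> n < y"
proof -
  obtain q :: nat where q: "1 / (y - x) < 2 ^ q"
    using real_arch_pow[of 2 "1/(y-x)"] by auto
  have pos: "(0::real) < 2 ^ q" by simp
  define p where "p = nat (floor (x * 2 ^ q)) + 1"
  have p1: "x * 2 ^ q < real p"
    unfolding p_def using assms(1) by (simp add: of_nat_nat) linarith
  have p2: "real p \<le> x * 2 ^ q + 1"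
    unfolding p_def using assms(1) by (simp add: of_nat_nat)
  have "1 < (y - x) * 2 ^ q" using q assms by (simp add: field_simps)
  then have p3: "real p < y * 2 ^ q" using p2 by (simp add: algebra_simps)
  define n where "n = prod_encode (p, q) + 4"
  have "fval \<alpha> n = real p / 2 ^ q"
    unfolding n_def fval_def by simp
  moreover have "x < real p / 2 ^ q" using p1 pos by (simp add: field_simps)
  moreover have "real p / 2 ^ q < y" using p3 pos by (simp add: field_simps)
  ultimately show ?thesis by metis
qed

lemma fval0: "fval \<alpha> 0 = 0" and fval1: "fval \<alpha> 1 = 1"
  by (simp_all add: fval_def)

lemma kappa_idx:
  assumes "\<alpha> > 0" "wA > 0" "wB > 0" "wB = \<alpha> * wA \<or> wA = \<alpha> * wB"
  shows "\<exists>n. fval \<alpha> n = wB / (wA + wB)"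
proof (cases "wB = \<alpha> * wA")
  case True
  have "wA + wB = wA * (1 + \<alpha>)" using True by (simp add: algebra_simps)
  then have "wB / (wA + wB) = (\<alpha> * wA) / (wA * (1 + \<alpha>))" using True by simp
  also have "\<dots> = \<alpha> / (1 + \<alpha>)" using assms by simp
  finally have "fval \<alpha> 3 = wB / (wA + wB)" by (simp add: fval_def)
  then show ?thesis by blast
next
  case False
  then have e: "wA = \<alpha> * wB" using assms by blast
  have "wA + wB = wB * (1 + \<alpha>)" using e by (simp add: algebra_simps)
  then have "wB / (wA + wB) = wB / (wB * (1 + \<alpha>))" by simp
  also have "\<dots> = 1 / (1 + \<alpha>)" using assms by simp
  finally have "fval \<alpha> 2 = wB / (wA + wB)" by (simp add: fval_def)
  then show ?thesis by blast
qed



locale gsetup =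
  fixes \<alpha> wA wB :: real and WA WB :: "nat \<Rightarrow> real"
  assumes \<alpha>: "\<alpha> > 0" and wA: "wA > 0" and wB: "wB > 0"
    and WA: "\<forall>k. WA k \<ge> 0" and WB: "\<forall>k. WB k \<ge> 0" and first: "WA 0 \<le> WB 0"
    and speed: "wB = \<alpha> * wA \<or> wA = \<alpha> * wB"
begin

definition "tA = WA 0"
definition "tB = WB 0"
definition "T = tA + 1 / wA"
definition "\<sigma> = Lr WB wB 1 (\<lambda>_. 1)"

abbreviation good where
  "good \<equiv> \<exists>DrA DrB KA KB chA chB \<rho>A \<rho>B. RCr \<alpha> WA wA 0 DrA KA chA \<rho>A \<rho>B \<and> RCr \<alpha> WB wB 1 DrB KB chB \<rho>B \<rho>A"

lemma tA_le_tB: "tA \<le> tB" using first by (simp add: tA_def tB_def)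
lemma tA_nonneg: "tA \<ge> 0" using WA by (simp add: tA_def)
lemma tA_lt_T: "tA < T" using wA by (simp add: T_def)

lemma \<sigma>_Suc: "\<sigma> (Suc k) = \<sigma> k + WB (Suc k)"
  by (simp add: \<sigma>_def Lr_stay_Suc)
lemma \<sigma>0: "\<sigma> 0 = tB"
  by (simp add: \<sigma>_def Lr_def tB_def)
lemma \<sigma>_mono: "k \<le> k' \<Longrightarrow> \<sigma> k \<le> \<sigma> k'"
  unfolding \<sigma>_def using Lr_mono[OF WB wB] by blast
lemma \<sigma>_ge_tB: "tB \<le> \<sigma> k"
  using \<sigma>_mono[of 0 k] \<sigma>0 by simp

definition "\<rho>1 t = (if t \<le> tA then 0 else if t \<le> T then (t - tA) * wA else 1)"

lemma \<rho>1_lt: "t < T \<Longrightarrow> \<rho>1 t < 1"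
proof -
  assume "t < T"
  then have "(t - tA) * wA < (T - tA) * wA" using wA by (simp add: mult_strict_right_mono)
  also have "(T - tA) * wA = 1" using wA by (simp add: T_def)
  finally show ?thesis unfolding \<rho>1_def using \<open>t < T\<close> by auto
qed

lemma \<rho>1_ge: "T \<le> t \<Longrightarrow> \<rho>1 t = 1"
proof -
  assume h: "T \<le> t"
  then have "\<not> t \<le> tA" using tA_lt_T by simp
  moreover have "t \<le> T \<Longrightarrow> (t - tA) * wA = 1"
  proof -
    assume "t \<le> T" then have "t = T" using h by simp
    then show ?thesis using wA by (simp add: T_def)
  qed
  ultimately show ?thesis by (simp add: \<rho>1_def)
qed

lemma \<rho>1_mid: "tA \<le> t \<Longrightarrow> t \<le> T \<Longrightarrow> \<rho>1 t = (t - tA) * wA"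
  by (auto simp: \<rho>1_def)

lemma \<rho>1_0: "t \<le> tA \<Longrightarrow> \<rho>1 t = 0"
  by (auto simp: \<rho>1_def)

lemma case1:
  assumes "\<exists>j. T \<le> \<sigma> j"
  shows good
proof -
  define j0 where "j0 = (LEAST j. T \<le> \<sigma> j)"
  have hj0: "T \<le> \<sigma> j0" unfolding j0_def using assms by (rule LeastI_ex)
  have lt: "\<And>k. k < j0 \<Longrightarrow> \<sigma> k < T" unfolding j0_def using not_less_Least not_le by blast
  define DrA :: "nat \<Rightarrow> real" where "DrA = (\<lambda>_. 1)"
  have SA0: "Sr WA wA 0 DrA 0 = 0" by simp
  have LA0: "Lr WA wA 0 DrA 0 = tA" by (simp add: Lr_def tA_def)
  have SA1: "Sr WA wA 0 DrA 1 = T" by (simp add: DrA_def T_def tA_def)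
  have LA1: "Lr WA wA 0 DrA 1 = T + WA 1" using SA1 by (simp add: Lr_def)
  have XA0: "Xr 0 DrA 0 = 0" and XA1: "Xr 0 DrA 1 = 1" by (simp_all add: DrA_def)
  have WA1: "WA 1 \<ge> 0" using WA by simp
  have rA: "RCr \<alpha> WA wA 0 DrA 1 (\<lambda>_. 1) \<rho>1 (\<lambda>_. 1)"
    unfolding RCr_def
  proof (intro conjI allI impI)
    fix k t assume "k \<le> 1" "Sr WA wA 0 DrA k \<le> t \<and> t \<le> Lr WA wA 0 DrA k"
    then show "\<rho>1 t = Xr 0 DrA k"
      using SA0 LA0 SA1 LA1 XA0 XA1 \<rho>1_0 \<rho>1_ge by (cases k) auto
  next
    fix k :: nat assume "k < 1"
    then show "\<rho>1 (Lr WA wA 0 DrA k) \<noteq> 1" using LA0 \<rho>1_0 by simp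
  next
    show "\<rho>1 (Lr WA wA 0 DrA 1) = 1" using LA1 WA1 \<rho>1_ge by simp
  next
    fix t assume "Lr WA wA 0 DrA 1 \<le> t"
    then show "\<rho>1 t = Xr 0 DrA 1" using LA1 WA1 \<rho>1_ge XA1 by simp
  next
    fix k :: nat assume "k < 1"
    then show "DrA k = Xr 0 DrA k + fval \<alpha> 1 * (1 - Xr 0 DrA k)" by (simp add: DrA_def fval_def)
  next
    fix k t assume "k < (1::nat)" "Lr WA wA 0 DrA k \<le> t \<and> t \<le> Sr WA wA 0 DrA (Suc k)"
    then show "\<rho>1 t = Xr 0 DrA k + (t - Lr WA wA 0 DrA k) * wA * sgn (DrA k - Xr 0 DrA k)"
      using LA0 SA1 \<rho>1_mid by (simp add: DrA_def)
  qed
  have rB: "RCr \<alpha> WB wB 1 (\<lambda>_. 1) j0 (\<lambda>_. 0) (\<lambda>_. 1) \<rho>1"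
    unfolding RCr_def Xr_const \<sigma>_def[symmetric]
  proof (intro conjI allI impI)
    fix k assume "k < j0"
    then show "1 \<noteq> \<rho>1 (\<sigma> k)" using lt \<rho>1_lt by force
  next
    show "1 = \<rho>1 (\<sigma> j0)" using hj0 \<rho>1_ge by simp
  qed (simp_all add: fval0)
  show ?thesis using rA rB by blast
qed

end


locale icpt = gsetup +
  fixes l0 :: real
  assumes l01: "tA \<le> l0" and l02: "l0 < T"
begin

definition "rp = (l0 - tA) * wA"
definition "\<kappa> = wB / (wA + wB)"
definition "rm = 1 - \<kappa> * (1 - rp)"
definition "\<tau> = l0 + (1 - rp) / (wA + wB)"

lemma rp0: "0 \<le> rp" using l01 wA by (simp add: rp_def)
lemma rp1: "rp < 1"
proof -
  have "(l0 - tA) * wA < (T - tA) * wA" using l02 wA by (simp add: mult_strict_right_mono)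
  also have "(T - tA) * wA = 1" using wA by (simp add: T_def)
  finally show ?thesis by (simp add: rp_def)
qed
lemma \<kappa>0: "0 < \<kappa>" using wA wB by (simp add: \<kappa>_def)
lemma \<kappa>1: "\<kappa> < 1" using wA wB by (simp add: \<kappa>_def)
lemma rm1: "rm < 1" using \<kappa>0 rp1 by (simp add: rm_def)
lemma rm_rp: "rp < rm"
proof -
  have "rm - rp = (1 - rp) * (1 - \<kappa>)" by (simp add: rm_def algebra_simps)
  moreover have "(1 - rp) * (1 - \<kappa>) > 0" using rp1 \<kappa>1 by simp
  ultimately show ?thesis by simp
qed
lemma rm0: "0 < rm" using rm_rp rp0 by simp

lemma \<tau>_gt: "l0 < \<tau>" using rp1 wA wB by (simp add: \<tau>_def)
lemma \<tau>_A: "(\<tau> - tA) * wA = rm"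
proof -
  have "(\<tau> - tA) * wA = rp + (1 - rp) * wA / (wA + wB)"
    by (simp add: \<tau>_def rp_def algebra_simps add_divide_distrib)
  also have "(1 - rp) * wA / (wA + wB) = (1 - rp) * (1 - \<kappa>)" using wA wB by (simp add: \<kappa>_def field_simps)
  finally show ?thesis by (simp add: rm_def algebra_simps)
qed
lemma \<tau>_B: "l0 + \<bar>rm - 1\<bar> / wB = \<tau>"
proof -
  have "\<bar>rm - 1\<bar> = \<kappa> * (1 - rp)" using rm1 by (simp add: rm_def)
  then have "\<bar>rm - 1\<bar> / wB = (1 - rp) / (wA + wB)" using wA wB by (simp add: \<kappa>_def field_simps)
  then show ?thesis by (simp add: \<tau>_def)
qed
lemma \<tau>_B': "1 - (\<tau> - l0) * wB = rm"
proof -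
  have "(\<tau> - l0) * wB = \<kappa> * (1 - rp)" using wA wB by (simp add: \<tau>_def \<kappa>_def field_simps)
  then show ?thesis by (simp add: rm_def)
qed
lemma \<tau>_T: "\<tau> < T"
proof -
  have "\<tau> = tA + rm / wA" using \<tau>_A wA by (simp add: field_simps)
  then show ?thesis using rm1 wA by (simp add: T_def divide_strict_right_mono)
qed
lemma tA_\<tau>: "tA < \<tau>" using l01 \<tau>_gt by simp

definition "\<rho>m t = (if t \<le> l0 then 1 else if t \<le> \<tau> then 1 - (t - l0) * wB else rm)"

lemma \<rho>m_1: "t \<le> l0 \<Longrightarrow> \<rho>m t = 1" by (simp add: \<rho>m_def)
lemma \<rho>m_mid: "l0 \<le> t \<Longrightarrow> t \<le> \<tau> \<Longrightarrow> \<rho>m t = 1 - (t - l0) * wB" by (auto simp: \<rho>m_def)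
lemma \<rho>m_rm: "\<tau> \<le> t \<Longrightarrow> \<rho>m t = rm"
  using \<tau>_gt \<tau>_B' by (auto simp: \<rho>m_def)

end



context gsetup begin

lemma icpt_at: "tA \<le> l \<Longrightarrow> l < T \<Longrightarrow> icpt \<alpha> wA wB WA WB l"
  by (intro icpt.intro icpt_axioms.intro gsetup_axioms) auto

lemma \<sigma>_ge_tA: "tA \<le> \<sigma> k" using \<sigma>_ge_tB tA_le_tB by (rule order_trans[rotated])

lemma case2a:
  assumes C2: "\<forall>j. \<sigma> j < T" and hj: "WB (Suc j) = 0"
  shows good
proof -
  interpret I: icpt \<alpha> wA wB WA WB "\<sigma> j"
    using icpt_at \<sigma>_ge_tA C2 by blast
  obtain ki where ki: "fval \<alpha> ki = I.\<kappa>"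
    using kappa_idx[OF \<alpha> wA wB] speed unfolding I.\<kappa>_def by blast
  define T1 where "T1 = T + WA 1"
  define e where "e = T1 + (1 - I.rm) / wA"
  have WA1: "WA 1 \<ge> 0" and WA2: "WA 2 \<ge> 0" using WA by auto
  have TT1: "T \<le> T1" using WA1 by (simp add: T1_def)
  have T1e: "T1 < e" using I.rm1 wA by (simp add: e_def)
  define \<rho>A where "\<rho>A t = (if t \<le> T then \<rho>1 t else if t \<le> T1 then 1 else if t \<le> e then 1 - (t - T1) * wA else I.rm)" for t
  have \<rho>A_le: "\<And>t. t \<le> T \<Longrightarrow> \<rho>A t = \<rho>1 t" by (simp add: \<rho>A_def)
  have \<rho>A_1: "\<And>t. T \<le> t \<Longrightarrow> t \<le> T1 \<Longrightarrow> \<rho>A t = 1" using \<rho>1_ge by (auto simp: \<rho>A_def)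
  have \<rho>A_2: "\<And>t. T1 \<le> t \<Longrightarrow> t \<le> e \<Longrightarrow> \<rho>A t = 1 - (t - T1) * wA"
    using \<rho>1_ge TT1 by (auto simp: \<rho>A_def)
  have \<rho>A_3: "\<And>t. e \<le> t \<Longrightarrow> \<rho>A t = I.rm"
  proof -
    fix t assume "e \<le> t"
    moreover have "1 - (e - T1) * wA = I.rm" using wA by (simp add: e_def)
    ultimately show "\<rho>A t = I.rm" using T1e TT1 by (auto simp: \<rho>A_def)
  qed
  define DrA :: "nat \<Rightarrow> real" where "DrA k = (if k = 0 then 1 else I.rm)" for k
  define DrB :: "nat \<Rightarrow> real" where "DrB k = (if k < j then 1 else I.rm)" for k
  have SA1: "Sr WA wA 0 DrA 1 = T" by (simp add: DrA_def T_def tA_def)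
  have LA0: "Lr WA wA 0 DrA 0 = tA" by (simp add: Lr_def tA_def)
  have LA1: "Lr WA wA 0 DrA 1 = T1" using SA1 by (simp add: Lr_def T1_def)
  have SA2: "Sr WA wA 0 DrA 2 = e"
  proof -
    have "Sr WA wA 0 DrA 2 = Lr WA wA 0 DrA 1 + \<bar>DrA 1 - Xr 0 DrA 1\<bar> / wA"
      using Sr_Suc'[of WA wA 0 DrA 1] unfolding Suc_1 .
    then show ?thesis using LA1 I.rm1 by (simp add: DrA_def e_def)
  qed
  have LA2: "Lr WA wA 0 DrA 2 = e + WA 2" using SA2 by (simp add: Lr_def)
  have XA0: "Xr 0 DrA 0 = 0" and XA1: "Xr 0 DrA 1 = 1" and XA2: "Xr 0 DrA 2 = I.rm"
    by (simp_all add: DrA_def numeral_2_eq_2)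
  have rA: "RCr \<alpha> WA wA 0 DrA 2 (\<lambda>_. 1) \<rho>A I.\<rho>m"
    unfolding RCr_def
  proof (intro conjI allI impI)
    fix k t assume k: "k \<le> 2" and t: "Sr WA wA 0 DrA k \<le> t \<and> t \<le> Lr WA wA 0 DrA k"
    have "k = 0 \<or> k = 1 \<or> k = 2" using k by arith
    then show "\<rho>A t = Xr 0 DrA k"
    proof (elim disjE)
      assume "k = 0" then show ?thesis using t LA0 tA_lt_T \<rho>A_le \<rho>1_0 XA0 by simp
    next
      assume "k = 1" then show ?thesis using t SA1 LA1 \<rho>A_1 XA1 by simp
    next
      assume "k = 2" then show ?thesis using t SA2 \<rho>A_3 XA2 by simp
    qed
  next
    fix k :: nat assume "k < 2"
    then have "k = 0 \<or> k = 1" by arith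
    then show "\<rho>A (Lr WA wA 0 DrA k) \<noteq> I.\<rho>m (Lr WA wA 0 DrA k)"
    proof (elim disjE)
      assume "k = 0" then show ?thesis
        using LA0 tA_lt_T \<rho>A_le \<rho>1_0 I.\<rho>m_1 \<sigma>_ge_tA by simp
    next
      assume "k = 1" then show ?thesis
        using LA1 TT1 \<rho>A_1 I.\<rho>m_rm I.\<tau>_T I.rm1 by simp
    qed
  next
    show "\<rho>A (Lr WA wA 0 DrA 2) = I.\<rho>m (Lr WA wA 0 DrA 2)"
      using LA2 WA2 \<rho>A_3 I.\<rho>m_rm I.\<tau>_T TT1 T1e by simp
  next
    fix t assume "Lr WA wA 0 DrA 2 \<le> t"
    then show "\<rho>A t = Xr 0 DrA 2" using LA2 WA2 \<rho>A_3 XA2 by simp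
  next
    fix k :: nat assume "k < 2"
    then have "k = 0 \<or> k = 1" by arith
    then show "DrA k = Xr 0 DrA k + fval \<alpha> 1 * (I.\<rho>m (Lr WA wA 0 DrA k) - Xr 0 DrA k)"
    proof (elim disjE)
      assume "k = 0" then show ?thesis
        using LA0 I.\<rho>m_1 \<sigma>_ge_tA by (simp add: fval_def DrA_def)
    next
      assume "k = 1" then show ?thesis
        using LA1 TT1 I.\<rho>m_rm I.\<tau>_T by (simp add: fval_def DrA_def)
    qed
  next
    fix k t assume "k < (2::nat)" and t: "Lr WA wA 0 DrA k \<le> t \<and> t \<le> Sr WA wA 0 DrA (Suc k)"
    then have "k = 0 \<or> k = 1" by arith
    then show "\<rho>A t = Xr 0 DrA k + (t - Lr WA wA 0 DrA k) * wA * sgn (DrA k - Xr 0 DrA k)"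
    proof (elim disjE)
      assume "k = 0" then show ?thesis
        using t LA0 SA1 \<rho>A_le \<rho>1_mid by (simp add: DrA_def)
    next
      assume "k = 1" then show ?thesis
        using t LA1 SA2 \<rho>A_2 I.rm1 by (simp add: DrA_def numeral_2_eq_2)
    qed
  qed
  have LBk: "\<And>k. k \<le> j \<Longrightarrow> Lr WB wB 1 DrB k = \<sigma> k"
    unfolding \<sigma>_def by (rule Lr_prefix) (simp add: DrB_def)
  have XBk: "\<And>k. k \<le> j \<Longrightarrow> Xr 1 DrB k = 1"
    by (case_tac k) (auto simp: DrB_def)
  have XBj: "Xr 1 DrB (Suc j) = I.rm" by (simp add: DrB_def)
  have SB0: "\<And>k. 0 \<le> Sr WB wB 1 DrB k" using Sr_mono[OF WB wB, of 0] by simp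
  have SBj: "Sr WB wB 1 DrB (Suc j) = I.\<tau>"
    using LBk[of j] XBk[of j] I.\<tau>_B by (simp del: Sr.simps add: Sr_Suc' DrB_def)
  have LBj: "Lr WB wB 1 DrB (Suc j) = I.\<tau>" using SBj hj by (simp add: Lr_def)
  have SBle: "\<And>k. k < j \<Longrightarrow> Sr WB wB 1 DrB (Suc k) \<le> \<sigma> j"
  proof -
    fix k assume "k < j"
    have "Sr WB wB 1 DrB (Suc k) \<le> Sr WB wB 1 DrB j" using Sr_mono[OF WB wB, of "Suc k" j] \<open>k < j\<close> by (simp del: Sr.simps)
    also have "\<dots> \<le> Lr WB wB 1 DrB j" using Sr_le_Lr WB by blast
    finally show "Sr WB wB 1 DrB (Suc k) \<le> \<sigma> j" using LBk by simp
  qed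
  have rB: "RCr \<alpha> WB wB 1 DrB (Suc j) (\<lambda>k. if k < j then 0 else ki) I.\<rho>m \<rho>A"
    unfolding RCr_def
  proof (intro conjI allI impI)
    fix k t assume k: "k \<le> Suc j" and t: "Sr WB wB 1 DrB k \<le> t \<and> t \<le> Lr WB wB 1 DrB k"
    show "I.\<rho>m t = Xr 1 DrB k"
    proof (cases "k \<le> j")
      case True
      then have "t \<le> \<sigma> j" using t LBk \<sigma>_mono by (metis order_trans)
      then show ?thesis using I.\<rho>m_1 XBk True by simp
    next
      case False
      then have "k = Suc j" using k by simp
      then show ?thesis using t SBj LBj XBj I.\<rho>m_rm by simp
    qed
  next
    fix k assume k: "k < Suc j"
    then have "Lr WB wB 1 DrB k = \<sigma> k" "\<sigma> k \<le> \<sigma> j" using LBk \<sigma>_mono by auto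
    moreover have "\<rho>A (\<sigma> k) < 1" using C2 \<rho>A_le \<rho>1_lt less_imp_le by metis
    ultimately show "I.\<rho>m (Lr WB wB 1 DrB k) \<noteq> \<rho>A (Lr WB wB 1 DrB k)" using I.\<rho>m_1 by simp
  next
    have "\<rho>A I.\<tau> = I.rm" using \<rho>A_le I.\<tau>_T \<rho>1_mid I.tA_\<tau> I.\<tau>_A by simp
    then show "I.\<rho>m (Lr WB wB 1 DrB (Suc j)) = \<rho>A (Lr WB wB 1 DrB (Suc j))"
      using LBj I.\<rho>m_rm by simp
  next
    fix t assume "Lr WB wB 1 DrB (Suc j) \<le> t"
    then show "I.\<rho>m t = Xr 1 DrB (Suc j)" using LBj I.\<rho>m_rm XBj by simp
  next
    fix k assume k: "k < Suc j"
    show "DrB k = Xr 1 DrB k + fval \<alpha> (if k < j then 0 else ki) * (\<rho>A (Lr WB wB 1 DrB k) - Xr 1 DrB k)"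
    proof (cases "k < j")
      case True then show ?thesis using XBk by (simp add: DrB_def fval_def)
    next
      case False
      then have kj: "k = j" using k by simp
      have "\<rho>A (\<sigma> j) = I.rp" using \<rho>A_le C2 \<rho>1_mid \<sigma>_ge_tA less_imp_le unfolding I.rp_def by metis
      then show ?thesis using kj ki XBk LBk by (simp add: DrB_def I.rm_def algebra_simps)
    qed
  next
    fix k t assume k: "k < Suc j" and t: "Lr WB wB 1 DrB k \<le> t \<and> t \<le> Sr WB wB 1 DrB (Suc k)"
    show "I.\<rho>m t = Xr 1 DrB k + (t - Lr WB wB 1 DrB k) * wB * sgn (DrB k - Xr 1 DrB k)"
    proof (cases "k < j")
      case True
      then have "t \<le> \<sigma> j" using t SBle by (meson order_trans)
      then show ?thesis using True XBk I.\<rho>m_1 by (simp add: DrB_def)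
    next
      case False
      then have kj: "k = j" using k by simp
      then show ?thesis using t LBk SBj XBk I.\<rho>m_mid I.rm1 by (simp add: DrB_def)
    qed
  qed
  show ?thesis using rA rB by blast
qed

end


context gsetup begin

lemma case2b_alpha:
  assumes C2: "\<forall>j. \<sigma> j < T" and pos: "\<forall>j. WB (Suc j) > 0"
    and sub: "WA 1 < \<sigma> n - tB"
  shows good
proof -
  have tBT: "tB < T" using C2 \<sigma>0 by metis
  interpret I: icpt \<alpha> wA wB WA WB tB
    using icpt_at tA_le_tB tBT by blast
  obtain ki where ki: "fval \<alpha> ki = I.\<kappa>"
    using kappa_idx[OF \<alpha> wA wB] speed unfolding I.\<kappa>_def by blast
  define smax where "smax = (\<sigma> n - tB - WA 1) / 2"
  have smax: "smax > 0" using sub by (simp add: smax_def)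
  obtain ci where ci1: "I.rm < fval \<alpha> ci" and ci2: "fval \<alpha> ci < I.rm + wA * smax"
    using fval_dense[of I.rm "I.rm + wA * smax" \<alpha>] I.rm0 smax wA by auto
  define c where "c = fval \<alpha> ci"
  define s where "s = (c - I.rm) / wA"
  have s0: "s > 0" using ci1 wA by (simp add: s_def c_def)
  have s1: "s < smax" using ci2 wA by (simp add: s_def c_def field_simps)
  have c0: "c > 0" using ci1 I.rm0 by (simp add: c_def)
  define tg where "tg = tA + c / wA"
  have tg\<tau>: "tg = I.\<tau> + s"
  proof -
    have "I.\<tau> = tA + I.rm / wA" using I.\<tau>_A wA by (simp add: field_simps)
    then show ?thesis using wA by (simp add: tg_def s_def field_simps)
  qed
  define T1 where "T1 = tg + WA 1"
  define e where "e = T1 + s"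
  have WA1: "WA 1 \<ge> 0" and WA2: "WA 2 \<ge> 0" using WA by auto
  have tAtg: "tA < tg" using I.tA_\<tau> tg\<tau> s0 by simp
  have tgT1: "tg \<le> T1" using WA1 by (simp add: T1_def)
  have T1e: "T1 < e" using s0 by (simp add: e_def)
  define \<rho>A where "\<rho>A t = (if t \<le> tA then 0 else if t \<le> tg then (t - tA) * wA else if t \<le> T1 then c
       else if t \<le> e then c - (t - T1) * wA else I.rm)" for t
  have \<rho>A_0: "\<And>t. t \<le> tA \<Longrightarrow> \<rho>A t = 0" by (simp add: \<rho>A_def)
  have \<rho>A_1: "\<And>t. tA \<le> t \<Longrightarrow> t \<le> tg \<Longrightarrow> \<rho>A t = (t - tA) * wA" by (auto simp: \<rho>A_def)
  have ctg: "(tg - tA) * wA = c" using wA by (simp add: tg_def)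
  have \<rho>A_2: "\<And>t. tg \<le> t \<Longrightarrow> t \<le> T1 \<Longrightarrow> \<rho>A t = c" using tAtg ctg by (auto simp: \<rho>A_def)
  have \<rho>A_3: "\<And>t. T1 \<le> t \<Longrightarrow> t \<le> e \<Longrightarrow> \<rho>A t = c - (t - T1) * wA"
    using tAtg tgT1 ctg by (auto simp: \<rho>A_def)
  have ce: "c - (e - T1) * wA = I.rm" using wA by (simp add: e_def s_def)
  have \<rho>A_4: "\<And>t. e \<le> t \<Longrightarrow> \<rho>A t = I.rm"
    using tAtg tgT1 T1e ce by (auto simp: \<rho>A_def)
  have \<rho>A_tB: "\<rho>A tB = I.rp"
  proof (cases "tB \<le> tA")
    case True then have "tB = tA" using tA_le_tB by simp
    have r: "I.rp = (tB - tA) * wA" by (rule I.rp_def)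
    show ?thesis using r \<rho>A_0 True \<open>tB = tA\<close> by simp
  next
    case False then show ?thesis using \<rho>A_1 I.\<tau>_gt tg\<tau> s0 by (simp add: I.rp_def)
  qed
  have \<rho>A_ne: "\<And>t. I.\<tau> < t \<Longrightarrow> t < e \<Longrightarrow> \<rho>A t \<noteq> I.rm"
  proof -
    fix t assume h: "I.\<tau> < t" "t < e"
    show "\<rho>A t \<noteq> I.rm"
    proof (cases "t \<le> tg")
      case True
      have "(I.\<tau> - tA) * wA < (t - tA) * wA" using h wA by (simp add: mult_strict_right_mono)
      then show ?thesis using True \<rho>A_1 I.\<tau>_A I.tA_\<tau> h by simp
    next
      case False
      show ?thesis
      proof (cases "t \<le> T1")
        case True then show ?thesis using False \<rho>A_2 ci1 by (simp add: c_def)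
      next
        case F2: False
        have "(t - T1) * wA < (e - T1) * wA" using h wA by (simp add: mult_strict_right_mono)
        then show ?thesis using F2 \<rho>A_3 h ce by simp
      qed
    qed
  qed
  define DrA :: "nat \<Rightarrow> real" where "DrA k = (if k = 0 then c else I.rm)" for k
  have LA0: "Lr WA wA 0 DrA 0 = tA" by (simp add: Lr_def tA_def)
  have SA1: "Sr WA wA 0 DrA 1 = tg" using c0 by (simp add: DrA_def tg_def tA_def)
  have LA1: "Lr WA wA 0 DrA 1 = T1" using SA1 by (simp add: Lr_def T1_def)
  have SA2: "Sr WA wA 0 DrA 2 = e"
  proof -
    have "Sr WA wA 0 DrA 2 = Lr WA wA 0 DrA 1 + \<bar>DrA 1 - Xr 0 DrA 1\<bar> / wA"
      using Sr_Suc'[of WA wA 0 DrA 1] unfolding Suc_1 .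
    moreover have "\<bar>DrA 1 - Xr 0 DrA 1\<bar> / wA = s" using ci1 by (simp add: DrA_def s_def c_def)
    ultimately show ?thesis using LA1 by (simp add: e_def)
  qed
  have LA2: "Lr WA wA 0 DrA 2 = e + WA 2" using SA2 by (simp add: Lr_def)
  have XA0: "Xr 0 DrA 0 = 0" and XA1: "Xr 0 DrA 1 = c" and XA2: "Xr 0 DrA 2 = I.rm"
    by (simp_all add: DrA_def numeral_2_eq_2)
  have \<tau>T1: "I.\<tau> < T1" using tg\<tau> s0 tgT1 by simp
  have rA: "RCr \<alpha> WA wA 0 DrA 2 (\<lambda>k. if k = 0 then ci else 1) \<rho>A I.\<rho>m"
    unfolding RCr_def
  proof (intro conjI allI impI)
    fix k t assume k: "k \<le> 2" and t: "Sr WA wA 0 DrA k \<le> t \<and> t \<le> Lr WA wA 0 DrA k"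
    have "k = 0 \<or> k = 1 \<or> k = 2" using k by arith
    then show "\<rho>A t = Xr 0 DrA k"
    proof (elim disjE)
      assume "k = 0" then show ?thesis using t LA0 \<rho>A_0 XA0 by simp
    next
      assume "k = 1" then show ?thesis using t SA1 LA1 \<rho>A_2 XA1 by simp
    next
      assume "k = 2" then show ?thesis using t SA2 \<rho>A_4 XA2 by simp
    qed
  next
    fix k :: nat assume "k < 2"
    then have "k = 0 \<or> k = 1" by arith
    then show "\<rho>A (Lr WA wA 0 DrA k) \<noteq> I.\<rho>m (Lr WA wA 0 DrA k)"
    proof (elim disjE)
      assume "k = 0" then show ?thesis using LA0 \<rho>A_0 I.\<rho>m_1 tA_le_tB by simp
    next
      assume "k = 1" then show ?thesis
        using LA1 tgT1 \<rho>A_2 I.\<rho>m_rm \<tau>T1 ci1 by (simp add: c_def)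
    qed
  next
    show "\<rho>A (Lr WA wA 0 DrA 2) = I.\<rho>m (Lr WA wA 0 DrA 2)"
      using LA2 WA2 \<rho>A_4 I.\<rho>m_rm \<tau>T1 T1e by simp
  next
    fix t assume "Lr WA wA 0 DrA 2 \<le> t"
    then show "\<rho>A t = Xr 0 DrA 2" using LA2 WA2 \<rho>A_4 XA2 by simp
  next
    fix k :: nat assume "k < 2"
    then have "k = 0 \<or> k = 1" by arith
    then show "DrA k = Xr 0 DrA k + fval \<alpha> (if k = 0 then ci else 1) * (I.\<rho>m (Lr WA wA 0 DrA k) - Xr 0 DrA k)"
    proof (elim disjE)
      assume "k = 0" then show ?thesis
        using LA0 I.\<rho>m_1 tA_le_tB by (simp add: DrA_def c_def)
    next
      assume "k = 1" then show ?thesis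
        using LA1 \<tau>T1 I.\<rho>m_rm by (simp add: fval_def DrA_def)
    qed
  next
    fix k t assume "k < (2::nat)" and t: "Lr WA wA 0 DrA k \<le> t \<and> t \<le> Sr WA wA 0 DrA (Suc k)"
    then have "k = 0 \<or> k = 1" by arith
    then show "\<rho>A t = Xr 0 DrA k + (t - Lr WA wA 0 DrA k) * wA * sgn (DrA k - Xr 0 DrA k)"
    proof (elim disjE)
      assume "k = 0" then show ?thesis
        using t LA0 SA1 \<rho>A_1 c0 by (simp add: DrA_def)
    next
      assume "k = 1" then show ?thesis
        using t LA1 SA2 \<rho>A_3 ci1 by (simp add: DrA_def numeral_2_eq_2 c_def)
    qed
  qed
  define DrB :: "nat \<Rightarrow> real" where "DrB k = I.rm" for k
  have ex: "\<exists>m. 2 * s + WA 1 \<le> \<sigma> m - tB" using s1 by (intro exI[of _ n]) (simp add: smax_def)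
  define nB where "nB = (LEAST m. 2 * s + WA 1 \<le> \<sigma> m - tB)"
  have nB1: "2 * s + WA 1 \<le> \<sigma> nB - tB" unfolding nB_def using ex by (rule LeastI_ex)
  have nB2: "\<And>m. m < nB \<Longrightarrow> \<sigma> m - tB < 2 * s + WA 1"
    unfolding nB_def using not_less_Least not_le by blast
  have nB0: "nB \<noteq> 0" using nB1 \<sigma>0 s0 WA1 by (metis add_pos_nonneg diff_self mult_pos_pos not_le zero_less_numeral)
  have LB0: "Lr WB wB 1 DrB 0 = tB" by (simp add: Lr_def tB_def)
  have SB1: "Sr WB wB 1 DrB 1 = I.\<tau>" using I.\<tau>_B by (simp add: DrB_def tB_def)
  have XBs: "\<And>k. Xr 1 DrB (Suc k) = I.rm" by (simp add: DrB_def)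
  have LBs: "\<And>k. Lr WB wB 1 DrB (Suc k) = I.\<tau> + (\<sigma> (Suc k) - tB)"
  proof -
    fix k show "Lr WB wB 1 DrB (Suc k) = I.\<tau> + (\<sigma> (Suc k) - tB)"
    proof (induction k)
      case 0 then show ?case using SB1 \<sigma>_Suc[of 0] \<sigma>0 by (simp add: Lr_def)
    next
      case (Suc k)
      have "Lr WB wB 1 DrB (Suc (Suc k)) = Lr WB wB 1 DrB (Suc k) + WB (Suc (Suc k))"
        by (simp add: Lr_def DrB_def)
      then show ?case using Suc \<sigma>_Suc[of "Suc k"] by simp
    qed
  qed
  have SBge: "\<And>k. k \<ge> 1 \<Longrightarrow> I.\<tau> \<le> Sr WB wB 1 DrB k"
    using Sr_mono[OF WB wB, of 1] SB1 by metis
  have \<sigma>pos: "\<And>k. k \<ge> 1 \<Longrightarrow> \<sigma> k - tB > 0"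
  proof -
    fix k :: nat assume "k \<ge> 1"
    have "\<sigma> 1 \<le> \<sigma> k" using \<sigma>_mono \<open>k \<ge> 1\<close> by blast
    moreover have "\<sigma> 1 = tB + WB 1" using \<sigma>_Suc[of 0] \<sigma>0 by simp
    moreover have "WB 1 > 0" using pos by (metis One_nat_def)
    ultimately show "\<sigma> k - tB > 0" by simp
  qed
  have e_eq: "e = I.\<tau> + (2 * s + WA 1)" by (simp add: e_def T1_def tg\<tau>)
  have rB: "RCr \<alpha> WB wB 1 DrB nB (\<lambda>k. if k = 0 then ki else 0) I.\<rho>m \<rho>A"
    unfolding RCr_def
  proof (intro conjI allI impI)
    fix k t assume k: "k \<le> nB" and t: "Sr WB wB 1 DrB k \<le> t \<and> t \<le> Lr WB wB 1 DrB k"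
    show "I.\<rho>m t = Xr 1 DrB k"
    proof (cases k)
      case 0 then show ?thesis using t LB0 I.\<rho>m_1 by simp
    next
      case (Suc k') then show ?thesis using t SBge[of k] I.\<rho>m_rm XBs by simp
    qed
  next
    fix k assume k: "k < nB"
    show "I.\<rho>m (Lr WB wB 1 DrB k) \<noteq> \<rho>A (Lr WB wB 1 DrB k)"
    proof (cases k)
      case 0 then show ?thesis using LB0 I.\<rho>m_1 \<rho>A_tB I.rp1 by simp
    next
      case (Suc k')
      have "\<sigma> k - tB > 0" using \<sigma>pos Suc by simp
      moreover have "\<sigma> k - tB < 2 * s + WA 1" using nB2 k by simp
      ultimately have "I.\<tau> < Lr WB wB 1 DrB k" "Lr WB wB 1 DrB k < e"
        using LBs Suc e_eq by auto
      then have "\<rho>A (Lr WB wB 1 DrB k) \<noteq> I.rm" "I.\<rho>m (Lr WB wB 1 DrB k) = I.rm"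
        using I.\<rho>m_rm \<rho>A_ne by auto
      then show ?thesis by simp
    qed
  next
    obtain k' where nk: "nB = Suc k'" using nB0 not0_implies_Suc by blast
    have "e \<le> Lr WB wB 1 DrB nB" using LBs nk nB1 e_eq by simp
    then show "I.\<rho>m (Lr WB wB 1 DrB nB) = \<rho>A (Lr WB wB 1 DrB nB)"
      using \<rho>A_4 I.\<rho>m_rm \<tau>T1 T1e by simp
  next
    fix t assume "Lr WB wB 1 DrB nB \<le> t"
    moreover obtain k' where nk: "nB = Suc k'" using nB0 not0_implies_Suc by blast
    ultimately show "I.\<rho>m t = Xr 1 DrB nB" using LBs[of k'] \<sigma>pos[of nB] I.\<rho>m_rm XBs by simp
  next
    fix k assume k: "k < nB"
    show "DrB k = Xr 1 DrB k + fval \<alpha> (if k = 0 then ki else 0) * (\<rho>A (Lr WB wB 1 DrB k) - Xr 1 DrB k)"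
    proof (cases k)
      case 0 then show ?thesis using LB0 \<rho>A_tB ki by (simp add: DrB_def I.rm_def algebra_simps)
    next
      case (Suc k') then show ?thesis using XBs by (simp add: DrB_def fval_def)
    qed
  next
    fix k t assume k: "k < nB" and t: "Lr WB wB 1 DrB k \<le> t \<and> t \<le> Sr WB wB 1 DrB (Suc k)"
    show "I.\<rho>m t = Xr 1 DrB k + (t - Lr WB wB 1 DrB k) * wB * sgn (DrB k - Xr 1 DrB k)"
    proof (cases k)
      case 0 then show ?thesis using t LB0 SB1 I.\<rho>m_mid I.rm1 by (simp add: DrB_def)
    next
      case (Suc k')
      then have "I.\<tau> \<le> t" using t LBs[of k'] \<sigma>pos[of k] by simp
      then show ?thesis using Suc I.\<rho>m_rm XBs by (simp add: DrB_def)
    qed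
  qed
  show ?thesis using rA rB by blast
qed

end


context gsetup begin

lemma case2b_beta:
  assumes C2: "\<forall>j. \<sigma> j < T" and pos: "\<forall>j. WB (Suc j) > 0"
    and sub: "\<forall>n. \<sigma> n - tB \<le> WA 1"
  shows good
proof -
  have tBT: "tB < T" using C2 \<sigma>0 by metis
  interpret I: icpt \<alpha> wA wB WA WB tB
    using icpt_at tA_le_tB tBT by blast
  obtain ki where ki: "fval \<alpha> ki = I.\<kappa>"
    using kappa_idx[OF \<alpha> wA wB] speed unfolding I.\<kappa>_def by blast
  have WB1: "WB 1 > 0" and WB2: "WB 2 > 0" using pos by (metis One_nat_def, metis Suc_1)
  have \<sigma>2: "\<sigma> 2 = tB + WB 1 + WB 2" using \<sigma>_Suc[of 0] \<sigma>_Suc[of 1] \<sigma>0 by (simp add: numeral_2_eq_2)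
  have WAB: "WB 1 < WA 1" using sub[rule_format, of 2] \<sigma>2 WB2 by simp
  define smax where "smax = min (WB 1) ((WA 1 - WB 1) * wB / wA)"
  have smax: "smax > 0" using WB1 WAB wA wB by (simp add: smax_def)
  obtain ci where ci1: "I.rm < fval \<alpha> ci" and ci2: "fval \<alpha> ci < I.rm + wA * smax"
    using fval_dense[of I.rm "I.rm + wA * smax" \<alpha>] I.rm0 smax wA by auto
  define c where "c = fval \<alpha> ci"
  define s where "s = (c - I.rm) / wA"
  have s0: "s > 0" using ci1 wA by (simp add: s_def c_def)
  have s1: "s < smax" using ci2 wA by (simp add: s_def c_def field_simps)
  have s2: "s \<le> WB 1" using s1 by (simp add: smax_def)
  have s3: "s * wA / wB \<le> WA 1 - WB 1"
  proof -
    have "s < (WA 1 - WB 1) * wB / wA" using s1 by (simp add: smax_def)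
    then have "s * wA < (WA 1 - WB 1) * wB" using wA by (simp add: field_simps)
    then show ?thesis using wB by (simp add: field_simps)
  qed
  have c0: "c > 0" using ci1 I.rm0 by (simp add: c_def)
  define tg where "tg = tA + c / wA"
  have tg\<tau>: "tg = I.\<tau> + s"
  proof -
    have "I.\<tau> = tA + I.rm / wA" using I.\<tau>_A wA by (simp add: field_simps)
    then show ?thesis using wA by (simp add: tg_def s_def field_simps)
  qed
  define T1 where "T1 = tg + WA 1"
  define l1 where "l1 = I.\<tau> + WB 1"
  define e where "e = l1 + s * wA / wB"
  have WA1: "WA 1 \<ge> 0" using WA by auto
  have tAtg: "tA < tg" using I.tA_\<tau> tg\<tau> s0 by simp
  have tgl1: "tg \<le> l1" using tg\<tau> s2 by (simp add: l1_def)
  have l1e: "l1 < e" using s0 wA wB by (simp add: e_def)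
  have eT1: "e \<le> T1" using s3 tg\<tau> s0 by (simp add: e_def l1_def T1_def)
  have \<tau>l1: "I.\<tau> < l1" using WB1 by (simp add: l1_def)
  define \<rho>A where "\<rho>A t = (if t \<le> tA then 0 else if t \<le> tg then (t - tA) * wA else c)" for t
  have \<rho>A_0: "\<And>t. t \<le> tA \<Longrightarrow> \<rho>A t = 0" by (simp add: \<rho>A_def)
  have \<rho>A_1: "\<And>t. tA \<le> t \<Longrightarrow> t \<le> tg \<Longrightarrow> \<rho>A t = (t - tA) * wA" by (auto simp: \<rho>A_def)
  have ctg: "(tg - tA) * wA = c" using wA by (simp add: tg_def)
  have \<rho>A_2: "\<And>t. tg \<le> t \<Longrightarrow> \<rho>A t = c" using tAtg ctg by (auto simp: \<rho>A_def)
  have \<rho>A_tB: "\<rho>A tB = I.rp"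
  proof (cases "tB \<le> tA")
    case True then have "tB = tA" using tA_le_tB by simp
    have r: "I.rp = (tB - tA) * wA" by (rule I.rp_def)
    show ?thesis using r \<rho>A_0 True \<open>tB = tA\<close> by simp
  next
    case False then show ?thesis using \<rho>A_1 I.\<tau>_gt tg\<tau> s0 by (simp add: I.rp_def)
  qed
  define \<rho>B where "\<rho>B t = (if t \<le> l1 then I.\<rho>m t else if t \<le> e then I.rm + (t - l1) * wB else c)" for t
  have \<rho>B_0: "\<And>t. t \<le> l1 \<Longrightarrow> \<rho>B t = I.\<rho>m t" by (simp add: \<rho>B_def)
  have \<rho>B_1: "\<And>t. l1 \<le> t \<Longrightarrow> t \<le> e \<Longrightarrow> \<rho>B t = I.rm + (t - l1) * wB"
    using \<tau>l1 I.\<rho>m_rm by (auto simp: \<rho>B_def)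
  have ce: "I.rm + (e - l1) * wB = c" using wB wA by (simp add: e_def s_def)
  have \<rho>B_2: "\<And>t. e \<le> t \<Longrightarrow> \<rho>B t = c" using l1e ce by (auto simp: \<rho>B_def)
  define DrA :: "nat \<Rightarrow> real" where "DrA k = c" for k
  have LA0: "Lr WA wA 0 DrA 0 = tA" by (simp add: Lr_def tA_def)
  have SA1: "Sr WA wA 0 DrA 1 = tg" using c0 by (simp add: DrA_def tg_def tA_def)
  have LA1: "Lr WA wA 0 DrA 1 = T1" using SA1 by (simp add: Lr_def T1_def)
  have XA0: "Xr 0 DrA 0 = 0" and XA1: "Xr 0 DrA 1 = c" by (simp_all add: DrA_def)
  have rA: "RCr \<alpha> WA wA 0 DrA 1 (\<lambda>k. ci) \<rho>A \<rho>B"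
    unfolding RCr_def
  proof (intro conjI allI impI)
    fix k t assume k: "k \<le> 1" and t: "Sr WA wA 0 DrA k \<le> t \<and> t \<le> Lr WA wA 0 DrA k"
    have "k = 0 \<or> k = 1" using k by arith
    then show "\<rho>A t = Xr 0 DrA k"
    proof (elim disjE)
      assume "k = 0" then show ?thesis using t LA0 \<rho>A_0 XA0 by simp
    next
      assume "k = 1" then show ?thesis using t SA1 \<rho>A_2 XA1 by simp
    qed
  next
    fix k :: nat assume "k < 1"
    then show "\<rho>A (Lr WA wA 0 DrA k) \<noteq> \<rho>B (Lr WA wA 0 DrA k)"
      using LA0 \<rho>A_0 \<rho>B_0 I.\<rho>m_1 tA_le_tB \<tau>l1 I.\<tau>_gt by simp
  next
    show "\<rho>A (Lr WA wA 0 DrA 1) = \<rho>B (Lr WA wA 0 DrA 1)"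
      using LA1 eT1 \<rho>A_2 \<rho>B_2 tgl1 l1e by simp
  next
    fix t assume "Lr WA wA 0 DrA 1 \<le> t"
    then show "\<rho>A t = Xr 0 DrA 1" using LA1 \<rho>A_2 XA1 tgl1 l1e eT1 by simp
  next
    fix k :: nat assume "k < 1"
    then show "DrA k = Xr 0 DrA k + fval \<alpha> ci * (\<rho>B (Lr WA wA 0 DrA k) - Xr 0 DrA k)"
      using LA0 \<rho>B_0 I.\<rho>m_1 tA_le_tB \<tau>l1 I.\<tau>_gt by (simp add: DrA_def c_def)
  next
    fix k t assume "k < (1::nat)" and t: "Lr WA wA 0 DrA k \<le> t \<and> t \<le> Sr WA wA 0 DrA (Suc k)"
    then show "\<rho>A t = Xr 0 DrA k + (t - Lr WA wA 0 DrA k) * wA * sgn (DrA k - Xr 0 DrA k)"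
      using LA0 SA1 \<rho>A_1 c0 by (simp add: DrA_def)
  qed
  define DrB :: "nat \<Rightarrow> real" where "DrB k = (if k = 0 then I.rm else c)" for k
  have LB0: "Lr WB wB 1 DrB 0 = tB" by (simp add: Lr_def tB_def)
  have SB1: "Sr WB wB 1 DrB 1 = I.\<tau>" using I.\<tau>_B by (simp add: DrB_def tB_def)
  have LB1: "Lr WB wB 1 DrB 1 = l1" using SB1 by (simp add: Lr_def l1_def)
  have SB2: "Sr WB wB 1 DrB 2 = e"
  proof -
    have "Sr WB wB 1 DrB 2 = Lr WB wB 1 DrB 1 + \<bar>DrB 1 - Xr 1 DrB 1\<bar> / wB"
      using Sr_Suc'[of WB wB 1 DrB 1] unfolding Suc_1 .
    moreover have "\<bar>DrB 1 - Xr 1 DrB 1\<bar> / wB = s * wA / wB" using ci1 wA by (simp add: DrB_def s_def c_def)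
    ultimately show ?thesis using LB1 by (simp add: e_def)
  qed
  have LB2: "Lr WB wB 1 DrB 2 = e + WB 2" using SB2 by (simp add: Lr_def)
  have XB0: "Xr 1 DrB 0 = 1" and XB1: "Xr 1 DrB 1 = I.rm" and XB2: "Xr 1 DrB 2 = c"
    by (simp_all add: DrB_def numeral_2_eq_2)
  have rB: "RCr \<alpha> WB wB 1 DrB 2 (\<lambda>k. if k = 0 then ki else 1) \<rho>B \<rho>A"
    unfolding RCr_def
  proof (intro conjI allI impI)
    fix k t assume k: "k \<le> 2" and t: "Sr WB wB 1 DrB k \<le> t \<and> t \<le> Lr WB wB 1 DrB k"
    have "k = 0 \<or> k = 1 \<or> k = 2" using k by arith
    then show "\<rho>B t = Xr 1 DrB k"
    proof (elim disjE)
      assume "k = 0" then show ?thesis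
        using t LB0 \<rho>B_0 I.\<rho>m_1 XB0 \<tau>l1 I.\<tau>_gt by simp
    next
      assume "k = 1" then show ?thesis using t SB1 LB1 \<rho>B_0 I.\<rho>m_rm XB1 by simp
    next
      assume "k = 2" then show ?thesis using t SB2 \<rho>B_2 XB2 by simp
    qed
  next
    fix k :: nat assume "k < 2"
    then have "k = 0 \<or> k = 1" by arith
    then show "\<rho>B (Lr WB wB 1 DrB k) \<noteq> \<rho>A (Lr WB wB 1 DrB k)"
    proof (elim disjE)
      assume "k = 0" then show ?thesis
        using LB0 \<rho>B_0 I.\<rho>m_1 \<rho>A_tB I.rp1 \<tau>l1 I.\<tau>_gt by simp
    next
      assume "k = 1" then show ?thesis
        using LB1 \<rho>B_0 I.\<rho>m_rm \<tau>l1 \<rho>A_2 tgl1 ci1 by (simp add: c_def)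
    qed
  next
    show "\<rho>B (Lr WB wB 1 DrB 2) = \<rho>A (Lr WB wB 1 DrB 2)"
      using LB2 WB2 \<rho>B_2 \<rho>A_2 tgl1 l1e by simp
  next
    fix t assume "Lr WB wB 1 DrB 2 \<le> t"
    then show "\<rho>B t = Xr 1 DrB 2" using LB2 WB2 \<rho>B_2 XB2 by simp
  next
    fix k :: nat assume "k < 2"
    then have "k = 0 \<or> k = 1" by arith
    then show "DrB k = Xr 1 DrB k + fval \<alpha> (if k = 0 then ki else 1) * (\<rho>A (Lr WB wB 1 DrB k) - Xr 1 DrB k)"
    proof (elim disjE)
      assume "k = 0" then show ?thesis
        using LB0 \<rho>A_tB ki by (simp add: DrB_def I.rm_def algebra_simps)
    next
      assume "k = 1" then show ?thesis
        using LB1 \<rho>A_2 tgl1 by (simp add: fval_def DrB_def)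
    qed
  next
    fix k t assume "k < (2::nat)" and t: "Lr WB wB 1 DrB k \<le> t \<and> t \<le> Sr WB wB 1 DrB (Suc k)"
    then have "k = 0 \<or> k = 1" by arith
    then show "\<rho>B t = Xr 1 DrB k + (t - Lr WB wB 1 DrB k) * wB * sgn (DrB k - Xr 1 DrB k)"
    proof (elim disjE)
      assume "k = 0" then show ?thesis
        using t LB0 SB1 \<rho>B_0 I.\<rho>m_mid I.rm1 \<tau>l1 by (simp add: DrB_def)
    next
      assume "k = 1" then show ?thesis
        using t LB1 SB2 \<rho>B_1 ci1 by (simp add: DrB_def numeral_2_eq_2 c_def)
    qed
  qed
  show ?thesis using rA rB by blast
qed

lemma all_good: good
proof (cases "\<exists>j. T \<le> \<sigma> j")
  case True then show ?thesis by (rule case1)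
next
  case False
  then have C2: "\<forall>j. \<sigma> j < T" by (simp add: not_le)
  show ?thesis
  proof (cases "\<exists>j. WB (Suc j) = 0")
    case True then show ?thesis using case2a C2 by blast
  next
    case False
    then have pos: "\<forall>j. WB (Suc j) > 0" using WB by (metis less_eq_real_def)
    show ?thesis
    proof (cases "\<exists>n. WA 1 < \<sigma> n - tB")
      case True then show ?thesis using case2b_alpha C2 pos by blast
    next
      case False then show ?thesis using case2b_beta C2 pos by (simp add: not_less)
    qed
  qed
qed

end


lemma C0_rc:
  assumes "x0 True = x0 False"
  shows "RC \<alpha> (W i) (v i) (x0 i) (\<lambda>k. x0 i) 0 (\<lambda>_. 0) (\<lambda>t. x0 True) (\<lambda>t. x0 True)"
  using assms by (cases i) (auto simp: RC_def Let_def)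

lemma thm_core:
  assumes \<alpha>: "\<alpha> > 0" and v: "\<forall>i. v i > 0" and sp: "v True = \<alpha> * v False \<or> v False = \<alpha> * v True"
    and sim: "\<forall>i. similarity (fr i)" and W: "\<forall>i k. W i k \<ge> 0"
  shows "\<exists>A\<in>sets coin_space. A \<subseteq> {\<omega>. gathers (galg \<alpha>) fr v W x0 \<omega>} \<and> 0 < emeasure coin_space A"
proof (cases "x0 True = x0 False")
  case True
  have "\<And>i. RC \<alpha> (W i) (v i) (x0 i) ((\<lambda>i k. x0 i) i) ((\<lambda>_. 0) i) ((\<lambda>_ _. 0) i) ((\<lambda>_ t. x0 True) i) ((\<lambda>_ t. x0 True) (\<not> i))"
    using C0_rc[OF True] by simp
  then show ?thesis using cert[of fr \<alpha> W v x0 "\<lambda>i k. x0 i" "\<lambda>_. 0" "\<lambda>_ _. 0" "\<lambda>_ t. x0 True"] sim by blast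
next
  case False
  define i0 where "i0 = (W True 0 \<le> W False 0)"
  have first: "W i0 0 \<le> W (\<not> i0) 0" by (cases "W True 0 \<le> W False 0") (auto simp: i0_def)
  define a where "a = x0 i0"
  define u where "u = x0 (\<not> i0) - x0 i0"
  have u0: "u \<noteq> 0" using False by (cases i0) (auto simp: u_def)
  have cu: "cmod u > 0" using u0 by simp
  define wA where "wA = v i0 / cmod u"
  define wB where "wB = v (\<not> i0) / cmod u"
  have wA: "wA > 0" and wB: "wB > 0" using v cu by (simp_all add: wA_def wB_def)
  have speed: "wB = \<alpha> * wA \<or> wA = \<alpha> * wB"
    using sp by (cases i0) (auto simp: wA_def wB_def)
  interpret G: gsetup \<alpha> wA wB "W i0" "W (\<not> i0)"
    by unfold_locales (use \<alpha> wA wB W first speed in auto)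
  obtain DrA DrB KA KB chA chB \<rho>A \<rho>B where
    rA: "RCr \<alpha> (W i0) wA 0 DrA KA chA \<rho>A \<rho>B" and rB: "RCr \<alpha> (W (\<not> i0)) wB 1 DrB KB chB \<rho>B \<rho>A"
    using G.all_good by blast
  have x0A: "x0 i0 = lp a u 0" by (simp add: lp_def a_def)
  have x0B: "x0 (\<not> i0) = lp a u 1" by (simp add: lp_def a_def u_def)
  define D where "D i = (if i = i0 then (\<lambda>k. lp a u (DrA k)) else (\<lambda>k. lp a u (DrB k)))" for i
  define P where "P i = (if i = i0 then (\<lambda>t. lp a u (\<rho>A t)) else (\<lambda>t. lp a u (\<rho>B t)))" for i
  define K where "K i = (if i = i0 then KA else KB)" for i
  define ch where "ch i = (if i = i0 then chA else chB)" for i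
  have RA: "RC \<alpha> (W i0) (v i0) (x0 i0) (D i0) (K i0) (ch i0) (P i0) (P (\<not> i0))"
    unfolding x0A D_def P_def K_def ch_def using bridge[OF u0 _ wA_def rA] v by simp
  have RB: "RC \<alpha> (W (\<not> i0)) (v (\<not> i0)) (x0 (\<not> i0)) (D (\<not> i0)) (K (\<not> i0)) (ch (\<not> i0)) (P (\<not> i0)) (P (\<not> \<not> i0))"
    unfolding x0B D_def P_def K_def ch_def using bridge[OF u0 _ wB_def rB] v by simp
  have "\<And>i. RC \<alpha> (W i) (v i) (x0 i) (D i) (K i) (ch i) (P i) (P (\<not> i))"
  proof -
    fix i show "RC \<alpha> (W i) (v i) (x0 i) (D i) (K i) (ch i) (P i) (P (\<not> i))"
      using RA RB by (cases "i = i0") (auto simp: eq_commute[of i0])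
  qed
  then show ?thesis using cert[of fr \<alpha> W v x0 D K ch P] sim by blast
qed

theorem theorem2:
  fixes \<alpha> :: real
  assumes "\<alpha> > 0"
  shows "\<exists>alg :: complex \<Rightarrow> complex \<Rightarrow> (nat \<Rightarrow> bool) \<Rightarrow> complex.
    \<forall>(v :: bool \<Rightarrow> real) (fr :: bool \<Rightarrow> complex \<Rightarrow> complex) (x0 :: bool \<Rightarrow> complex)
      (W :: bool \<Rightarrow> nat \<Rightarrow> real).
      (\<forall>i. v i > 0) \<and> (v True = \<alpha> * v False \<or> v False = \<alpha> * v True) \<and>
      (\<forall>i. similarity (fr i)) \<and> (\<forall>i k. W i k \<ge> 0) \<longrightarrow>
      (\<exists>A \<in> sets coin_space. A \<subseteq> {\<omega>. gathers alg fr v W x0 \<omega>} \<and>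
         emeasure coin_space A > 0)"
  using thm_core[OF assms] by blast


end
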